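(* For any $\delta>0$ and $n\ge\lambda\ge 14\log\frac{4}{\delta}$, the algorithm $C_\lambda$ is $(\varepsilon,\delta)$-differentially private where \[ \varepsilon=\sqrt{\frac{32\log\frac{4}{\delta}}{\lambda-\sqrt{2\lambda\log\frac{2}{\delta}}}}\cdot\left(1-\frac{\lambda-\sqrt{2\lambda\log\frac{2}{\delta}}}{n}\right). \]
   Context: The algorithm $C_\lambda$ on input $(x_1,\dots,x_n)\in\{0,1\}^n$: sample $s\sim\mathrm{Bin}(n,\lambda/n)$; choose $H$ uniformly at random among subsets of $[n]$ of size $s$; output $\sum_{i\notin H}x_i+B$ where $B\sim\mathrm{Bin}(s,1/2)$ is independent. An algorithm $M$ on $\{0,1\}^n$ is $(\varepsilon,\delta)$-differentially private if for all $X,X'$ differing in one coordinate and every set $W$ of outputs, $\Pr[M(X)\in W]\le e^{\varepsilon}\Pr[M(X')\in W]+\delta$. $\log$ is the natural logarithm. *)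

theory Defs
  imports "HOL-Probability.Probability"
begin

definition C_alg :: "real \<Rightarrow> nat \<Rightarrow> bool list \<Rightarrow> nat pmf" where
  "C_alg lam n xs =
     do {
       s \<leftarrow> binomial_pmf n (lam / real n);
       H \<leftarrow> pmf_of_set {H. H \<subseteq> {..<n} \<and> card H = s};
       B \<leftarrow> binomial_pmf s (1/2);
       return_pmf ((\<Sum>i\<in>{..<n} - H. (if xs ! i then 1 else 0)) + B)
     }"

definition neighbours :: "nat \<Rightarrow> bool list \<Rightarrow> bool list \<Rightarrow> bool" where
  "neighbours n xs ys \<longleftrightarrow> length xs = n \<and> length ys = n \<and>
     card {i. i < n \<and> xs ! i \<noteq> ys ! i} = 1"

definition differentially_private ::
    "nat \<Rightarrow> (bool list \<Rightarrow> 'b pmf) \<Rightarrow> real \<Rightarrow> real \<Rightarrow> bool" where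
  "differentially_private n M eps del \<longleftrightarrow>
     (\<forall>xs ys W. neighbours n xs ys \<longrightarrow>
        measure_pmf.prob (M xs) W \<le> exp eps * measure_pmf.prob (M ys) W + del)"

end

theory Submission imports Defs "HOL-Analysis.Harmonic_Numbers" begin

lemma prob_bind_finite:
  assumes "finite S" "set_pmf M \<subseteq> S"
  shows "measure_pmf.prob (bind_pmf M N) X = (\<Sum>a\<in>S. pmf M a * measure_pmf.prob (N a) X)"
proof -
  have "emeasure (measure_pmf (bind_pmf M N)) X = (\<integral>\<^sup>+x. emeasure (N x) X \<partial>M)" by simp
  also have "\<dots> = (\<Sum>a\<in>S. emeasure (N a) X * pmf M a)"
    using assms by (intro nn_integral_measure_pmf_support) auto
  also have "\<dots> = (\<Sum>a\<in>S. ennreal (pmf M a * measure_pmf.prob (N a) X))"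
    by (intro sum.cong refl) (simp add: measure_pmf.emeasure_eq_measure ennreal_mult mult.commute)
  also have "\<dots> = ennreal (\<Sum>a\<in>S. pmf M a * measure_pmf.prob (N a) X)"
    by (rule sum_ennreal) simp
  finally have "ennreal (measure_pmf.prob (bind_pmf M N) X) = ennreal (\<Sum>a\<in>S. pmf M a * measure_pmf.prob (N a) X)"
    by (simp add: measure_pmf.emeasure_eq_measure)
  then show ?thesis
    by (rule ennreal_inj[THEN iffD1, rotated 2]) (auto intro!: sum_nonneg)
qed
lemma set_pmf_binomial_sub:
  assumes "q \<in> {0..1}" shows "set_pmf (binomial_pmf h q) \<subseteq> {..h}"
  using assms by (auto simp: set_pmf_binomial_eq split: if_splits)

lemma prob_binom_sum:
  assumes "q \<in> {0..1}"
  shows "measure_pmf.prob (binomial_pmf h q) V = (\<Sum>u\<in>V \<inter> {..h}. pmf (binomial_pmf h q) u)"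
proof -
  have "measure_pmf.prob (binomial_pmf h q) V = measure_pmf.prob (binomial_pmf h q) (V \<inter> {..h})"
    using assms by (intro measure_prob_cong_0) (auto simp: binomial_eq_0)
  also have "\<dots> = (\<Sum>u\<in>V \<inter> {..h}. pmf (binomial_pmf h q) u)"
    by (rule measure_measure_pmf_finite) auto
  finally show ?thesis .
qed

lemma sum_Pow_insert:
  assumes "finite A" "j \<notin> A"
  shows "(\<Sum>H\<in>Pow (insert j A). f H) = (\<Sum>H\<in>Pow A. f H + f (insert j H))"
proof -
  have inj: "inj_on (insert j) (Pow A)"
    using assms(2) by (auto simp: inj_on_def)
  have disj: "Pow A \<inter> insert j ` Pow A = {}" using assms(2) by auto
  have "(\<Sum>H\<in>Pow (insert j A). f H) = (\<Sum>H\<in>Pow A \<union> insert j ` Pow A. f H)"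
    by (simp add: Pow_insert)
  also have "\<dots> = (\<Sum>H\<in>Pow A. f H) + (\<Sum>H\<in>insert j ` Pow A. f H)"
    using assms disj by (intro sum.union_disjoint) auto
  also have "(\<Sum>H\<in>insert j ` Pow A. f H) = (\<Sum>H\<in>Pow A. f (insert j H))"
    using inj by (simp add: sum.reindex)
  finally show ?thesis by (simp add: sum.distrib)
qed

lemma sum_Pow_card:
  assumes "finite B"
  shows "(\<Sum>H\<in>Pow B. f (card H)) = (\<Sum>k\<le>card B. real (card B choose k) * f k)"
proof -
  have "(\<Sum>H\<in>Pow B. f (card H)) = (\<Sum>k\<le>card B. \<Sum>H\<in>{H. H \<in> Pow B \<and> card H = k}. f (card H))"
    using assms by (intro sum.group[symmetric]) (auto intro: card_mono)
  also have "\<dots> = (\<Sum>k\<le>card B. real (card B choose k) * f k)"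
  proof (intro sum.cong refl)
    fix k
    have "(\<Sum>H\<in>{H. H \<in> Pow B \<and> card H = k}. f (card H)) = (\<Sum>H\<in>{H. H \<subseteq> B \<and> card H = k}. f k)"
      by (intro sum.cong) auto
    also have "\<dots> = real (card B choose k) * f k"
      using n_subsets[OF assms, of k] by simp
    finally show "(\<Sum>H\<in>{H. H \<in> Pow B \<and> card H = k}. f (card H)) = real (card B choose k) * f k" .
  qed
  finally show ?thesis .
qed

lemma binom_half_Suc:
  "measure_pmf.prob (binomial_pmf (Suc h) (1/2)) V =
     (measure_pmf.prob (binomial_pmf h (1/2)) V + measure_pmf.prob (binomial_pmf h (1/2)) {u. Suc u \<in> V}) / 2"
proof -
  have eq: "binomial_pmf (Suc h) (1/2) = bernoulli_pmf (1/2) \<bind> (\<lambda>b. binomial_pmf h (1/2) \<bind> (\<lambda>k. return_pmf ((if b then 1 else 0) + k)))"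
    by (rule binomial_pmf_Suc) simp
  have "measure_pmf.prob (binomial_pmf (Suc h) (1/2)) V =
     (\<Sum>b\<in>UNIV. pmf (bernoulli_pmf (1/2)) b *
        measure_pmf.prob (binomial_pmf h (1/2) \<bind> (\<lambda>k. return_pmf ((if b then 1 else 0) + k))) V)"
    unfolding eq by (rule prob_bind_finite) auto
  also have "\<dots> = (measure_pmf.prob (binomial_pmf h (1/2)) V + measure_pmf.prob (binomial_pmf h (1/2)) {u. Suc u \<in> V}) / 2"
  proof -
    have m: "binomial_pmf h (1/2) \<bind> (\<lambda>k. return_pmf ((if b then 1 else 0) + k)) =
             map_pmf (\<lambda>k. (if b then 1 else 0) + k) (binomial_pmf h (1/2))" for b
      by (simp add: map_pmf_def)
    have v1: "((+) (Suc 0)) -` V = {u. Suc u \<in> V}" by auto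
    have v0: "((+) (0::nat)) -` V = V" by auto
    show ?thesis
      unfolding m measure_map_pmf UNIV_bool using v1 v0 by simp
  qed
  finally show ?thesis .
qed

lemma binom_step:
  assumes "v < h"
  shows "pmf (binomial_pmf h (1/2)) (Suc v) * real (Suc v) = pmf (binomial_pmf h (1/2)) v * real (h - v)"
proof -
  have "Suc v * (h choose Suc v) = (h - v) * (h choose v)"
    using binomial_absorption[of v h] binomial_absorb_comp[of h v] by simp
  hence e: "real (Suc v) * real (h choose Suc v) = real (h - v) * real (h choose v)"
    by (metis of_nat_mult)
  have s1: "Suc v + (h - Suc v) = h" "v + (h - v) = h" using assms by auto
  have p1: "(1/2::real) ^ Suc v * (1 - 1/2) ^ (h - Suc v) = (1/2) ^ h"
    using power_add[of "1/2::real" "Suc v" "h - Suc v"] s1 by simp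
  have p2: "(1/2::real) ^ v * (1 - 1/2) ^ (h - v) = (1/2) ^ h"
    using power_add[of "1/2::real" v "h - v"] s1 by simp
  show ?thesis
    using e p1 p2 by (simp add: mult_ac)
qed


lemma C_repr:
  assumes p: "0 \<le> p" "p \<le> 1" "p = lam / real n"
  shows "measure_pmf.prob (C_alg lam n xs) W =
    (\<Sum>H\<in>Pow {..<n}. p ^ card H * (1 - p) ^ (n - card H) *
       measure_pmf.prob (binomial_pmf (card H) (1/2))
         {u. (\<Sum>i\<in>{..<n} - H. (if xs ! i then 1 else 0)) + u \<in> W})"
proof -
  define Z where "Z H = (\<Sum>i\<in>{..<n} - H. (if xs ! i then 1 else 0::nat))" for H
  define S where "S s = {H. H \<subseteq> {..<n} \<and> card H = s}" for s
  define g where "g s H = measure_pmf.prob (binomial_pmf s (1/2)) {u. Z H + u \<in> W}" for s H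
  have pin: "lam / real n \<in> {0..1}" using p by simp
  have inner: "measure_pmf.prob (binomial_pmf s (1/2) \<bind> (\<lambda>B. return_pmf (Z H + B))) W = g s H" for s H
  proof -
    have "binomial_pmf s (1/2) \<bind> (\<lambda>B. return_pmf (Z H + B)) = map_pmf (\<lambda>B. Z H + B) (binomial_pmf s (1/2))"
      by (simp add: map_pmf_def)
    thus ?thesis by (simp add: g_def vimage_def)
  qed
  have cardS: "card (S s) = n choose s" for s
    unfolding S_def using n_subsets[of "{..<n}" s] by simp
  have finS: "finite (S s)" for s unfolding S_def by (auto intro: finite_subset)
  have neS: "S s \<noteq> {}" if "s \<le> n" for s
  proof -
    have "{..<s} \<in> S s" using that unfolding S_def by auto
    thus ?thesis by auto
  qed
  have mid: "measure_pmf.prob (pmf_of_set (S s) \<bind> (\<lambda>H. binomial_pmf s (1/2) \<bind> (\<lambda>B. return_pmf (Z H + B)))) W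
             = (\<Sum>H\<in>S s. g s H) / real (n choose s)" if "s \<le> n" for s
  proof -
    have "measure_pmf.prob (pmf_of_set (S s) \<bind> (\<lambda>H. binomial_pmf s (1/2) \<bind> (\<lambda>B. return_pmf (Z H + B)))) W
          = (\<Sum>H\<in>S s. pmf (pmf_of_set (S s)) H * g s H)"
      unfolding inner[symmetric] using finS neS[OF that] by (intro prob_bind_finite) auto
    also have "\<dots> = (\<Sum>H\<in>S s. g s H / real (n choose s))"
      using finS neS[OF that] by (intro sum.cong refl) (simp add: cardS)
    finally show ?thesis by (simp add: sum_divide_distrib)
  qed
  have C_eq: "C_alg lam n xs = binomial_pmf n (lam / real n) \<bind> (\<lambda>s. pmf_of_set (S s) \<bind> (\<lambda>H. binomial_pmf s (1/2) \<bind> (\<lambda>B. return_pmf (Z H + B))))"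
    unfolding C_alg_def S_def Z_def by simp
  have "measure_pmf.prob (C_alg lam n xs) W =
        (\<Sum>s\<le>n. pmf (binomial_pmf n (lam / real n)) s *
           measure_pmf.prob (pmf_of_set (S s) \<bind> (\<lambda>H. binomial_pmf s (1/2) \<bind> (\<lambda>B. return_pmf (Z H + B)))) W)"
    unfolding C_eq by (rule prob_bind_finite) (use set_pmf_binomial_sub[OF pin] in auto)
  also have "\<dots> = (\<Sum>s\<le>n. \<Sum>H\<in>S s. p ^ s * (1 - p) ^ (n - s) * g s H)"
  proof (intro sum.cong refl)
    fix s assume "s \<in> {..n}"
    hence s: "s \<le> n" by simp
    have nz: "real (n choose s) \<noteq> 0" using s by simp
    show "pmf (binomial_pmf n (lam / real n)) s *
           measure_pmf.prob (pmf_of_set (S s) \<bind> (\<lambda>H. binomial_pmf s (1/2) \<bind> (\<lambda>B. return_pmf (Z H + B)))) W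
          = (\<Sum>H\<in>S s. p ^ s * (1 - p) ^ (n - s) * g s H)"
    proof -
      have pm: "pmf (binomial_pmf n (lam / real n)) s = real (n choose s) * (p ^ s * (1 - p) ^ (n - s))"
        using pin by (simp add: p(3))
      have sd: "(\<Sum>H\<in>S s. p ^ s * (1 - p) ^ (n - s) * g s H) = p ^ s * (1 - p) ^ (n - s) * (\<Sum>H\<in>S s. g s H)"
        by (simp add: sum_distrib_left)
      have gen: "c \<noteq> 0 \<Longrightarrow> c * a * (X / c) = a * (X::real)" for c a X by simp
      show ?thesis unfolding mid[OF s] pm sd by (rule gen[OF nz])
    qed
  qed
  also have "\<dots> = (\<Sum>s\<le>n. \<Sum>H\<in>{H \<in> Pow {..<n}. card H = s}. p ^ card H * (1 - p) ^ (n - card H) * g (card H) H)"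
    by (intro sum.cong refl) (auto simp: S_def)
  also have "\<dots> = (\<Sum>H\<in>Pow {..<n}. p ^ card H * (1 - p) ^ (n - card H) * g (card H) H)"
  proof (rule sum.group)
    show "card ` Pow {..<n} \<subseteq> {..n}"
    proof
      fix x assume "x \<in> card ` Pow {..<n}"
      then obtain H where H: "H \<subseteq> {..<n}" "x = card H" by auto
      have "card H \<le> card {..<n}" by (rule card_mono) (use H in auto)
      thus "x \<in> {..n}" using H by simp
    qed
  qed auto
  finally show ?thesis unfolding g_def Z_def .
qed

lemma binom_ratio1:
  assumes h: "0 < h" and E: "0 \<le> E" and eps: "0 \<le> \<epsilon>"
    and key: "real h + 1 \<le> (1 + E) * (real h / 2 - \<epsilon>)"
  shows "measure_pmf.prob (binomial_pmf h (1/2)) V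
           \<le> E * measure_pmf.prob (binomial_pmf h (1/2)) {u. Suc u \<in> V} + exp (- 2 * \<epsilon>\<^sup>2 / real h)"
proof -
  define b where "b = pmf (binomial_pmf h (1/2))"
  have bnn: "\<And>u. 0 \<le> b u" unfolding b_def by simp
  define G where "G = {u \<in> V \<inter> {..h}. real u > real h / 2 - \<epsilon>}"
  define Bd where "Bd = {u \<in> V \<inter> {..h}. \<not> real u > real h / 2 - \<epsilon>}"
  have pos: "real h / 2 - \<epsilon> > 0"
  proof -
    have "0 < real h + 1" by simp
    also have "\<dots> \<le> (1 + E) * (real h / 2 - \<epsilon>)" by (rule key)
    finally show ?thesis using E by (simp add: zero_less_mult_iff)
  qed
  have "measure_pmf.prob (binomial_pmf h (1/2)) V = sum b (V \<inter> {..h})"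
    unfolding b_def by (rule prob_binom_sum) simp
  also have "V \<inter> {..h} = G \<union> Bd" unfolding G_def Bd_def by auto
  also have "sum b (G \<union> Bd) = sum b G + sum b Bd"
    by (rule sum.union_disjoint) (auto simp: G_def Bd_def)
  finally have split: "measure_pmf.prob (binomial_pmf h (1/2)) V = sum b G + sum b Bd" .
  have "sum b Bd \<le> sum b ({x. real x \<le> real h * (1/2) - \<epsilon>} \<inter> {..h})"
    by (rule sum_mono2) (auto simp: Bd_def bnn)
  also have "\<dots> = measure_pmf.prob (binomial_pmf h (1/2)) {x. real x \<le> real h * (1/2) - \<epsilon>}"
    unfolding b_def by (rule prob_binom_sum[symmetric]) simp
  also have "\<dots> \<le> exp (- 2 * \<epsilon>\<^sup>2 / real h)"
    using binomial_distribution.prob_le[of "1/2" h \<epsilon>] h eps by (simp add: binomial_distribution_def)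
  finally have badb: "sum b Bd \<le> exp (- 2 * \<epsilon>\<^sup>2 / real h)" .
  define G' where "G' = {v. Suc v \<in> G}"
  have GG: "G = Suc ` G'"
  proof -
    have "0 \<notin> G" using pos by (auto simp: G_def)
    then show ?thesis unfolding G'_def by (auto simp: image_iff) (metis not0_implies_Suc)
  qed
  have "sum b G = sum (b \<circ> Suc) G'" unfolding GG by (rule sum.reindex) simp
  also have "\<dots> \<le> sum (\<lambda>v. E * b v) G'"
  proof (rule sum_mono)
    fix v assume "v \<in> G'"
    hence v: "Suc v \<le> h" "real (Suc v) > real h / 2 - \<epsilon>" by (auto simp: G'_def G_def)
    have st: "b (Suc v) * real (Suc v) = b v * real (h - v)"
      unfolding b_def by (rule binom_step) (use v in auto)
    have "(1 + E) * (real h / 2 - \<epsilon>) < (1 + E) * real (Suc v)"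
      using v E by (intro mult_strict_left_mono) auto
    hence "real h + 1 < (1 + E) * real (Suc v)" using key by linarith
    hence "real h - real v \<le> E * real (Suc v)" by (simp add: ring_distribs)
    hence le: "real (h - v) \<le> E * real (Suc v)" using v by (simp add: of_nat_diff)
    have "b (Suc v) * real (Suc v) \<le> (E * b v) * real (Suc v)"
      unfolding st using mult_left_mono[OF le bnn[of v]] by (simp add: mult_ac)
    thus "(b \<circ> Suc) v \<le> E * b v" by simp
  qed
  also have "\<dots> = E * sum b G'" by (simp add: sum_distrib_left)
  also have "\<dots> \<le> E * sum b ({u. Suc u \<in> V} \<inter> {..h})"
    by (intro mult_left_mono sum_mono2 E) (auto simp: G'_def G_def bnn)
  also have "\<dots> = E * measure_pmf.prob (binomial_pmf h (1/2)) {u. Suc u \<in> V}"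
    unfolding b_def by (subst prob_binom_sum) simp_all
  finally show ?thesis using split badb by linarith
qed

lemma binom_ratio2:
  assumes h: "0 < h" and E: "0 \<le> E" and eps: "0 \<le> \<epsilon>"
    and key: "real h + 1 \<le> (1 + E) * (real h / 2 - \<epsilon>)"
  shows "measure_pmf.prob (binomial_pmf h (1/2)) {u. Suc u \<in> V}
           \<le> E * measure_pmf.prob (binomial_pmf h (1/2)) V + exp (- 2 * \<epsilon>\<^sup>2 / real h)"
proof -
  define b where "b = pmf (binomial_pmf h (1/2))"
  have bnn: "\<And>u. 0 \<le> b u" unfolding b_def by simp
  define V' where "V' = {u. Suc u \<in> V}"
  define G where "G = {u \<in> V' \<inter> {..h}. real u < real h / 2 + \<epsilon>}"
  define Bd where "Bd = {u \<in> V' \<inter> {..h}. \<not> real u < real h / 2 + \<epsilon>}"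
  have "measure_pmf.prob (binomial_pmf h (1/2)) V' = sum b (V' \<inter> {..h})"
    unfolding b_def by (rule prob_binom_sum) simp
  also have "V' \<inter> {..h} = G \<union> Bd" unfolding G_def Bd_def by auto
  also have "sum b (G \<union> Bd) = sum b G + sum b Bd"
    by (rule sum.union_disjoint) (auto simp: G_def Bd_def)
  finally have split: "measure_pmf.prob (binomial_pmf h (1/2)) V' = sum b G + sum b Bd" .
  have "sum b Bd \<le> sum b ({x. real x \<ge> real h * (1/2) + \<epsilon>} \<inter> {..h})"
    by (rule sum_mono2) (auto simp: Bd_def bnn)
  also have "\<dots> = measure_pmf.prob (binomial_pmf h (1/2)) {x. real x \<ge> real h * (1/2) + \<epsilon>}"
    unfolding b_def by (rule prob_binom_sum[symmetric]) simp
  also have "\<dots> \<le> exp (- 2 * \<epsilon>\<^sup>2 / real h)"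
    using binomial_distribution.prob_ge[of "1/2" h \<epsilon>] h eps by (simp add: binomial_distribution_def)
  finally have badb: "sum b Bd \<le> exp (- 2 * \<epsilon>\<^sup>2 / real h)" .
  have vlt: "v < h" and le: "real (Suc v) \<le> E * real (h - v)" if "v \<in> G" for v
  proof -
    from that have v: "v \<le> h" "real v < real h / 2 + \<epsilon>" by (auto simp: G_def)
    have "(1 + E) * (real h / 2 - \<epsilon>) < (1 + E) * (real h - real v)"
      using v E by (intro mult_strict_left_mono) auto
    hence *: "real h + 1 < (1 + E) * (real h - real v)" using key by simp
    show "v < h"
    proof (rule ccontr)
      assume "\<not> v < h" hence "v = h" using v by simp
      thus False using * by simp
    qed
    show "real (Suc v) \<le> E * real (h - v)" using * v by (simp add: of_nat_diff algebra_simps)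
  qed
  have "sum b G \<le> sum (\<lambda>v. E * b (Suc v)) G"
  proof (rule sum_mono)
    fix v assume v: "v \<in> G"
    have st: "b (Suc v) * real (Suc v) = b v * real (h - v)"
      unfolding b_def by (rule binom_step) (use vlt[OF v] in auto)
    have hv: "real (h - v) > 0" using vlt[OF v] by simp
    have "b v * real (h - v) \<le> (E * b (Suc v)) * real (h - v)"
      using mult_left_mono[OF le[OF v] bnn[of "Suc v"]] st by (simp add: mult_ac)
    thus "b v \<le> E * b (Suc v)" using hv by simp
  qed
  also have "\<dots> = E * sum (b \<circ> Suc) G" by (simp add: sum_distrib_left)
  also have "sum (b \<circ> Suc) G = sum b (Suc ` G)" by (rule sum.reindex[symmetric]) simp
  also have "E * sum b (Suc ` G) \<le> E * sum b (V \<inter> {..h})"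
  proof (intro mult_left_mono sum_mono2 E)
    show "Suc ` G \<subseteq> V \<inter> {..h}"
    proof
      fix w assume "w \<in> Suc ` G"
      then obtain v where v: "v \<in> G" "w = Suc v" by auto
      show "w \<in> V \<inter> {..h}" using vlt[OF v(1)] v by (auto simp: G_def V'_def)
    qed
  qed (auto simp: bnn)
  also have "\<dots> = E * measure_pmf.prob (binomial_pmf h (1/2)) V"
    unfolding b_def by (subst prob_binom_sum) simp_all
  finally show ?thesis using split badb unfolding V'_def by linarith
qed

lemma alg_mix:
  fixes p x y d E F :: real
  assumes p: "0 \<le> p" "p \<le> 1" and xy: "0 \<le> x" "0 \<le> y" and d: "0 \<le> d"
    and E: "1 \<le> E" and xle: "x \<le> E * y + d" and F: "1 \<le> F"
    and FE: "(1 - p/2) * E + p/2 \<le> F * (p/2 * E + (1 - p/2))"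
  shows "(1 - p) * x + p * (x + y) / 2 \<le> F * ((1 - p) * y + p * (x + y) / 2) + d"
proof -
  define c where "c = p / 2"
  have c: "0 \<le> c" "c \<le> 1/2" using p by (auto simp: c_def)
  have eqL: "(1 - p) * x + p * (x + y) / 2 = (1 - c) * x + c * y" by (simp add: c_def algebra_simps)
  have eqR: "(1 - p) * y + p * (x + y) / 2 = c * x + (1 - c) * y" by (simp add: c_def algebra_simps)
  define k where "k = 1 - c - F * c"
  have diff: "(1 - c) * x + c * y - F * (c * x + (1 - c) * y) = k * x + (c - F * (1 - c)) * y"
    by (simp add: k_def algebra_simps)
  have yco: "c - F * (1 - c) \<le> 0"
  proof -
    have "c \<le> 1 - c" using c by simp
    also have "1 - c \<le> F * (1 - c)" using F c by (intro mult_right_mono[of 1 F "1 - c", simplified]) auto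
    finally show ?thesis by simp
  qed
  show ?thesis
  proof (cases "k \<ge> 0")
    case True
    have "k * x \<le> k * (E * y + d)" using True xle by (rule mult_left_mono[rotated])
    moreover have "(1 - c) * E + c - F * (c * E + (1 - c)) \<le> 0" using FE by (simp add: c_def)
    moreover have "k \<le> 1"
    proof -
      have "0 \<le> F * c" using c F by simp
      thus ?thesis using c by (simp add: k_def)
    qed
    ultimately have "k * x + (c - F * (1 - c)) * y \<le> k * d"
    proof -
      assume a: "k * x \<le> k * (E * y + d)" "(1 - c) * E + c - F * (c * E + (1 - c)) \<le> 0"
      have "k * (E * y + d) + (c - F * (1 - c)) * y = ((1 - c) * E + c - F * (c * E + (1 - c))) * y + k * d"
        by (simp add: k_def algebra_simps)
      also have "\<dots> \<le> k * d" using a(2) xy(2) by (simp add: mult_nonpos_nonneg)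
      finally show ?thesis using a(1) by linarith
    qed
    moreover have "k * d \<le> d" using \<open>k \<le> 1\<close> d by (simp add: mult_left_le_one_le True)
    ultimately show ?thesis unfolding eqL eqR using diff by linarith
  next
    case False
    have "k * x \<le> 0" using False xy by (simp add: mult_nonpos_nonneg)
    moreover have "(c - F * (1 - c)) * y \<le> 0" using yco xy by (simp add: mult_nonpos_nonneg)
    ultimately show ?thesis unfolding eqL eqR using diff d by linarith
  qed
qed

lemma binom_lower_tail:
  fixes p h0 :: real
  assumes p: "0 \<le> p" "p \<le> 1" and h0: "0 \<le> h0"
  shows "(\<Sum>k\<le>N. real (N choose k) * p^k * (1-p)^(N-k) * (if real k < h0 then 1 else 0))
           \<le> exp (h0/2 - real N * p / 3)"
proof -
  have ind: "(if real k < h0 then 1 else 0) \<le> (3/2) powr h0 / (3/2)^k" for k :: nat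
  proof (cases "real k < h0")
    case True
    have "(3/2::real) powr h0 / (3/2)^k = (3/2) powr (h0 - real k)"
      by (simp add: powr_diff powr_realpow)
    also have "\<dots> \<ge> 1" using True by (intro ge_one_powr_ge_zero) auto
    finally show ?thesis using True by simp
  qed simp
  have "(\<Sum>k\<le>N. real (N choose k) * p^k * (1-p)^(N-k) * (if real k < h0 then 1 else 0))
        \<le> (\<Sum>k\<le>N. real (N choose k) * p^k * (1-p)^(N-k) * ((3/2) powr h0 / (3/2)^k))"
    using p by (intro sum_mono mult_left_mono ind) auto
  also have "\<dots> = (3/2) powr h0 * (\<Sum>k\<le>N. real (N choose k) * (p / (3/2))^k * (1-p)^(N-k))"
    by (simp add: sum_distrib_left power_divide field_simps)
  also have "(\<Sum>k\<le>N. real (N choose k) * (p / (3/2))^k * (1-p)^(N-k)) = (p / (3/2) + (1 - p))^N"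
    by (rule binomial_ring[symmetric])
  also have "(p / (3/2) + (1 - p)) = 1 - p / 3" by simp
  also have "(1 - p/3)^N \<le> exp (- p / 3) ^ N"
    using p by (intro power_mono) (auto simp: exp_ge_add_one_self[of "-p/3", simplified])
  also have "exp (- p / 3) ^ N = exp (- real N * p / 3)"
    by (simp add: exp_of_nat_mult[symmetric])
  also have "(3/2::real) powr h0 \<le> exp (h0 / 2)"
  proof -
    have "ln (3/2::real) \<le> 1/2" using ln_le_minus_one[of "3/2::real"] by simp
    hence "h0 * ln (3/2) \<le> h0 / 2" using h0 by (metis mult_left_mono mult.commute divide_inverse mult_1 inverse_eq_divide)
    thus ?thesis by (simp add: powr_def)
  qed
  hence "(3/2) powr h0 * exp (- real N * p / 3) \<le> exp (h0 / 2) * exp (- real N * p / 3)"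
    by (intro mult_right_mono) auto
  also have "\<dots> = exp (h0/2 - real N * p / 3)" by (simp add: exp_add[symmetric])
  finally show ?thesis by (simp add: mult_left_mono)
qed

lemma binom_sum_one:
  fixes p :: real
  shows "(\<Sum>k\<le>N. real (N choose k) * p^k * (1-p)^(N-k)) = 1"
  using binomial_ring[of p "1 - p" N] by simp



lemma core:
  fixes x0 x1 :: "bool list" and n j :: nat and p E F d1 h0 lam :: real
  assumes j: "j < n" and x0j: "\<not> x0 ! j" and x1j: "x1 ! j"
    and same: "\<And>i. i < n \<Longrightarrow> i \<noteq> j \<Longrightarrow> x0 ! i = x1 ! i"
    and p: "0 \<le> p" "p \<le> 1" "p = lam / real n"
    and E: "1 \<le> E" and F: "1 \<le> F" and FE: "(1 - p/2) * E + p/2 \<le> F * (p/2 * E + (1 - p/2))"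
    and d1: "0 \<le> d1"
    and good: "\<And>h V. real h \<ge> h0 \<Longrightarrow>
       measure_pmf.prob (binomial_pmf h (1/2)) V \<le> E * measure_pmf.prob (binomial_pmf h (1/2)) {u. Suc u \<in> V} + d1 \<and>
       measure_pmf.prob (binomial_pmf h (1/2)) {u. Suc u \<in> V} \<le> E * measure_pmf.prob (binomial_pmf h (1/2)) V + d1"
  shows "measure_pmf.prob (C_alg lam n x0) W \<le> F * measure_pmf.prob (C_alg lam n x1) W + d1 +
           (\<Sum>k\<le>n-1. real ((n-1) choose k) * p^k * (1-p)^(n-1-k) * (if real k < h0 then 1 else 0))"
    and "measure_pmf.prob (C_alg lam n x1) W \<le> F * measure_pmf.prob (C_alg lam n x0) W + d1 +
           (\<Sum>k\<le>n-1. real ((n-1) choose k) * p^k * (1-p)^(n-1-k) * (if real k < h0 then 1 else 0))"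
proof -
  define A' where "A' = {..<n} - {j}"
  have A: "{..<n} = insert j A'" using j by (auto simp: A'_def)
  have jA: "j \<notin> A'" by (simp add: A'_def)
  have finA: "finite A'" by (simp add: A'_def)
  have cardA: "card A' = n - 1" using j by (simp add: A'_def)
  define Z where "Z H = (\<Sum>i\<in>A' - H. (if x0 ! i then 1 else 0::nat))" for H
  define \<beta> where "\<beta> h V = measure_pmf.prob (binomial_pmf h (1/2)) V" for h V
  define V where "V H = {u. Z H + u \<in> W}" for H
  define r where "r H = \<beta> (card H) (V H)" for H
  define r' where "r' H = \<beta> (card H) {u. Suc u \<in> V H}" for H
  define v where "v (H::nat set) = p ^ card H * (1 - p) ^ (n - 1 - card H)" for H
  define ind where "ind (H::nat set) = (if real (card H) < h0 then 1 else 0::real)" for H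
  define L0 where "L0 H = (1 - p) * r H + p * (r H + r' H) / 2" for H
  define L1 where "L1 H = (1 - p) * r' H + p * (r H + r' H) / 2" for H
  have bnn: "0 \<le> \<beta> h X" "\<beta> h X \<le> 1" for h X by (simp_all add: \<beta>_def)
  have vnn: "0 \<le> v H" for H using p by (simp add: v_def)
  have cardH: "card H \<le> n - 1" "finite H" if "H \<in> Pow A'" for H
    using that card_mono[OF finA, of H] cardA finite_subset[OF _ finA, of H] by auto
  have cardI: "card (insert j H) = Suc (card H)" if "H \<in> Pow A'" for H
  proof -
    have "j \<notin> H" using that jA by auto
    thus ?thesis using cardH(2)[OF that] by simp
  qed
  have Zx0a: "(\<Sum>i\<in>{..<n} - H. (if x0 ! i then 1 else 0::nat)) = Z H" if "H \<in> Pow A'" for H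
  proof -
    have "{..<n} - H = insert j (A' - H)" using that A jA by auto
    thus ?thesis using x0j finA jA by (simp add: Z_def)
  qed
  have Zx0b: "(\<Sum>i\<in>{..<n} - insert j H. (if x0 ! i then 1 else 0::nat)) = Z H" if "H \<in> Pow A'" for H
  proof -
    have "{..<n} - insert j H = A' - H" using that A jA by auto
    thus ?thesis by (simp add: Z_def)
  qed
  have Zx1s: "(\<Sum>i\<in>A' - H. (if x1 ! i then 1 else 0::nat)) = Z H" for H
    unfolding Z_def by (intro sum.cong refl) (auto simp: A'_def same)
  have Zx1a: "(\<Sum>i\<in>{..<n} - H. (if x1 ! i then 1 else 0::nat)) = Suc (Z H)" if "H \<in> Pow A'" for H
  proof -
    have "{..<n} - H = insert j (A' - H)" using that A jA by auto
    thus ?thesis using x1j finA jA Zx1s[of H] by simp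
  qed
  have Zx1b: "(\<Sum>i\<in>{..<n} - insert j H. (if x1 ! i then 1 else 0::nat)) = Z H" if "H \<in> Pow A'" for H
  proof -
    have "{..<n} - insert j H = A' - H" using that A jA by auto
    thus ?thesis using Zx1s by simp
  qed
  have w0: "p ^ card H * (1 - p) ^ (n - card H) = (1 - p) * v H" if "H \<in> Pow A'" for H
  proof -
    have "n - card H = Suc (n - 1 - card H)" using cardH[OF that] j by auto
    thus ?thesis by (simp add: v_def)
  qed
  have w1: "p ^ Suc (card H) * (1 - p) ^ (n - Suc (card H)) = p * v H" for H
    by (simp add: v_def diff_diff_left)
  have P0: "measure_pmf.prob (C_alg lam n x0) W = (\<Sum>H\<in>Pow A'. v H * L0 H)"
  proof -
    have "measure_pmf.prob (C_alg lam n x0) W =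
      (\<Sum>H\<in>Pow (insert j A'). p ^ card H * (1 - p) ^ (n - card H) *
         \<beta> (card H) {u. (\<Sum>i\<in>{..<n} - H. (if x0 ! i then 1 else 0)) + u \<in> W})"
      unfolding \<beta>_def A[symmetric] by (rule C_repr[OF p])
    also have "\<dots> = (\<Sum>H\<in>Pow A'. v H * L0 H)"
    proof (subst sum_Pow_insert[OF finA jA], intro sum.cong refl)
      fix H assume H: "H \<in> Pow A'"
      have s: "\<beta> (Suc (card H)) (V H) = (r H + r' H) / 2"
        unfolding \<beta>_def r_def r'_def by (rule binom_half_Suc)
      show "p ^ card H * (1 - p) ^ (n - card H) * \<beta> (card H) {u. (\<Sum>i\<in>{..<n} - H. (if x0 ! i then 1 else 0)) + u \<in> W} +
            p ^ card (insert j H) * (1 - p) ^ (n - card (insert j H)) * \<beta> (card (insert j H)) {u. (\<Sum>i\<in>{..<n} - insert j H. (if x0 ! i then 1 else 0)) + u \<in> W}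
            = v H * L0 H"
        unfolding cardI[OF H] w0[OF H] w1 Zx0a[OF H] Zx0b[OF H] V_def[symmetric] s
        by (simp add: L0_def r_def algebra_simps)
    qed
    finally show ?thesis .
  qed
  have P1: "measure_pmf.prob (C_alg lam n x1) W = (\<Sum>H\<in>Pow A'. v H * L1 H)"
  proof -
    have "measure_pmf.prob (C_alg lam n x1) W =
      (\<Sum>H\<in>Pow (insert j A'). p ^ card H * (1 - p) ^ (n - card H) *
         \<beta> (card H) {u. (\<Sum>i\<in>{..<n} - H. (if x1 ! i then 1 else 0)) + u \<in> W})"
      unfolding \<beta>_def A[symmetric] by (rule C_repr[OF p])
    also have "\<dots> = (\<Sum>H\<in>Pow A'. v H * L1 H)"
    proof (subst sum_Pow_insert[OF finA jA], intro sum.cong refl)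
      fix H assume H: "H \<in> Pow A'"
      have s: "\<beta> (Suc (card H)) (V H) = (r H + r' H) / 2"
        unfolding \<beta>_def r_def r'_def by (rule binom_half_Suc)
      have vs: "{u. Suc (Z H) + u \<in> W} = {u. Suc u \<in> V H}" by (auto simp: V_def)
      show "p ^ card H * (1 - p) ^ (n - card H) * \<beta> (card H) {u. (\<Sum>i\<in>{..<n} - H. (if x1 ! i then 1 else 0)) + u \<in> W} +
            p ^ card (insert j H) * (1 - p) ^ (n - card (insert j H)) * \<beta> (card (insert j H)) {u. (\<Sum>i\<in>{..<n} - insert j H. (if x1 ! i then 1 else 0)) + u \<in> W}
            = v H * L1 H"
        unfolding cardI[OF H] w0[OF H] w1 Zx1a[OF H] Zx1b[OF H] V_def[symmetric] s vs
        by (simp add: L1_def r'_def algebra_simps)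
    qed
    finally show ?thesis .
  qed
  have per: "L0 H \<le> F * L1 H + d1 + ind H \<and> L1 H \<le> F * L0 H + d1 + ind H" for H
  proof (cases "real (card H) \<ge> h0")
    case True
    have g: "r H \<le> E * r' H + d1" "r' H \<le> E * r H + d1"
      using good[OF True, of "V H"] by (simp_all add: r_def r'_def \<beta>_def)
    have a1: "L0 H \<le> F * L1 H + d1"
      unfolding L0_def L1_def by (rule alg_mix[OF p(1,2) _ _ d1 E g(1) F FE]) (simp_all add: r_def r'_def bnn)
    have a2: "(1 - p) * r' H + p * (r' H + r H) / 2 \<le> F * ((1 - p) * r H + p * (r' H + r H) / 2) + d1"
      by (rule alg_mix[OF p(1,2) _ _ d1 E g(2) F FE]) (simp_all add: r_def r'_def bnn)
    have "ind H = 0" using True by (simp add: ind_def)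
    thus ?thesis using a1 a2 by (simp add: L0_def L1_def add.commute)
  next
    case False
    hence i1: "ind H = 1" by (simp add: ind_def)
    have rr: "0 \<le> r H" "r H \<le> 1" "0 \<le> r' H" "r' H \<le> 1" by (simp_all add: r_def r'_def bnn)
    have t1: "(1 - p) * r H \<le> 1 - p" "(1 - p) * r' H \<le> 1 - p"
      using rr p(1,2) by (simp_all add: mult_left_le)
    have t2: "p * (r H + r' H) / 2 \<le> p"
    proof -
      have "p * ((r H + r' H) / 2) \<le> p" using rr p(1,2) by (intro mult_left_le) auto
      thus ?thesis by simp
    qed
    have t3: "0 \<le> (1 - p) * r H" "0 \<le> (1 - p) * r' H" "0 \<le> p * (r H + r' H) / 2"
      using rr p(1,2) by simp_all
    have "L0 H \<le> 1" "L1 H \<le> 1" "0 \<le> L0 H" "0 \<le> L1 H"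
      unfolding L0_def L1_def using t1 t2 t3 by linarith+
    hence "0 \<le> F * L1 H" "0 \<le> F * L0 H" using F by simp_all
    thus ?thesis using i1 d1 \<open>L0 H \<le> 1\<close> \<open>L1 H \<le> 1\<close> by linarith
  qed
  have sv: "(\<Sum>H\<in>Pow A'. v H) = 1"
  proof -
    have "(\<Sum>H\<in>Pow A'. v H) = (\<Sum>k\<le>n-1. real ((n-1) choose k) * (p ^ k * (1 - p) ^ (n - 1 - k)))"
      unfolding v_def using sum_Pow_card[OF finA, of "\<lambda>k. p ^ k * (1 - p) ^ (n - 1 - k)"] cardA by simp
    also have "\<dots> = 1" using binom_sum_one[of "n-1" p] by (simp add: mult.assoc)
    finally show ?thesis .
  qed
  have sT: "(\<Sum>H\<in>Pow A'. v H * ind H) =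
     (\<Sum>k\<le>n-1. real ((n-1) choose k) * p^k * (1-p)^(n-1-k) * (if real k < h0 then 1 else 0))"
  proof -
    have "(\<Sum>H\<in>Pow A'. v H * ind H) = (\<Sum>k\<le>n-1. real ((n-1) choose k) * (p ^ k * (1 - p) ^ (n - 1 - k) * (if real k < h0 then 1 else 0)))"
      unfolding v_def ind_def
      using sum_Pow_card[OF finA, of "\<lambda>k. p ^ k * (1 - p) ^ (n - 1 - k) * (if real k < h0 then 1 else 0)"] cardA by simp
    thus ?thesis by (simp add: mult.assoc)
  qed
  have main: "(\<Sum>H\<in>Pow A'. v H * La H) \<le> F * (\<Sum>H\<in>Pow A'. v H * Lb H) + d1 + (\<Sum>H\<in>Pow A'. v H * ind H)"
    if le: "\<And>H. La H \<le> F * Lb H + d1 + ind H" for La Lb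
  proof -
    have "(\<Sum>H\<in>Pow A'. v H * La H) \<le> (\<Sum>H\<in>Pow A'. v H * (F * Lb H + d1 + ind H))"
      by (intro sum_mono mult_left_mono le vnn)
    also have "\<dots> = F * (\<Sum>H\<in>Pow A'. v H * Lb H) + d1 * (\<Sum>H\<in>Pow A'. v H) + (\<Sum>H\<in>Pow A'. v H * ind H)"
      by (simp add: algebra_simps sum.distrib sum_distrib_left)
    finally show ?thesis using sv by simp
  qed
  show "measure_pmf.prob (C_alg lam n x0) W \<le> F * measure_pmf.prob (C_alg lam n x1) W + d1 +
           (\<Sum>k\<le>n-1. real ((n-1) choose k) * p^k * (1-p)^(n-1-k) * (if real k < h0 then 1 else 0))"
    unfolding P0 P1 sT[symmetric] by (rule main) (use per in blast)
  show "measure_pmf.prob (C_alg lam n x1) W \<le> F * measure_pmf.prob (C_alg lam n x0) W + d1 +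
           (\<Sum>k\<le>n-1. real ((n-1) choose k) * p^k * (1-p)^(n-1-k) * (if real k < h0 then 1 else 0))"
    unfolding P0 P1 sT[symmetric] by (rule main) (use per in blast)
qed


lemma arith_good:
  fixes \<eta> m L h h0 :: real
  assumes e0: "0 \<le> \<eta>" and e1: "\<eta> \<le> 481/250" and em: "\<eta>\<^sup>2 * m = 32 * L"
    and mL: "217/25 * L \<le> m" and L: "4/3 \<le> L" and h0: "h0 = 16/25 * m" and hh: "h0 \<le> h"
  shows "h + 1 \<le> (2 + \<eta> + \<eta>\<^sup>2/2) * (h/2 - 5/32*\<eta>*h)"
    and "-2*(5/32*\<eta>*h)\<^sup>2/h \<le> -L"
proof -
  have m0: "0 < m" using mL L by linarith
  have hpos: "0 < h" using hh h0 m0 by linarith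
  have LL: "16/9 \<le> L * L"
  proof -
    have "(4/3) * (4/3) \<le> L * L" using L by (intro mult_mono) auto
    thus ?thesis by simp
  qed
  have mLL: "217/25 * (L * L) \<le> m * L"
  proof -
    have "(217/25 * L) * L \<le> m * L" using mL L by (intro mult_right_mono) auto
    thus ?thesis by (simp add: algebra_simps)
  qed
  have hh2: "h0 * h0 \<le> h * h" using hh h0 m0 by (intro mult_mono) auto
  have "h0 * h0 * \<eta>\<^sup>2 \<le> h * h * \<eta>\<^sup>2" using hh2 by (rule mult_right_mono) simp
  moreover have "h0 * h0 * \<eta>\<^sup>2 = 256/625 * m * (\<eta>\<^sup>2 * m)" unfolding h0 by (simp add: algebra_simps)
  ultimately have "256/625 * m * (32 * L) \<le> (h * \<eta>)\<^sup>2" unfolding em by (simp add: power2_eq_square algebra_simps)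
  hence "14\<^sup>2 \<le> (h * \<eta>)\<^sup>2" using mLL LL by (simp add: algebra_simps power2_eq_square)
  hence heta: "14 \<le> h * \<eta>" by (rule power2_le_imp_le) (use hpos e0 in simp)
  have poly: "3/40 \<le> 3/16 + 3/32 * \<eta> - 5/64 * \<eta>\<^sup>2"
  proof -
    have "\<eta>\<^sup>2 \<le> (481/250) * \<eta>" using e1 e0 unfolding power2_eq_square by (rule mult_right_mono)
    thus ?thesis using e1 by linarith
  qed
  have id: "(2 + \<eta> + \<eta>\<^sup>2/2) * (h/2 - 5/32*\<eta>*h) = h + (h * \<eta>) * (3/16 + 3/32 * \<eta> - 5/64 * \<eta>\<^sup>2)"
    by (simp add: field_simps power2_eq_square)
  have "14 * (3/40) \<le> (h * \<eta>) * (3/16 + 3/32 * \<eta> - 5/64 * \<eta>\<^sup>2)"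
    using heta poly by (intro mult_mono) auto
  thus "h + 1 \<le> (2 + \<eta> + \<eta>\<^sup>2/2) * (h/2 - 5/32*\<eta>*h)" using id by linarith
  have "-2*(5/32*\<eta>*h)\<^sup>2/h = - (50/1024) * \<eta>\<^sup>2 * h"
    using hpos by (simp add: power2_eq_square field_simps)
  also have "\<dots> \<le> - (50/1024) * \<eta>\<^sup>2 * h0"
  proof -
    have "\<eta>\<^sup>2 * h0 \<le> \<eta>\<^sup>2 * h" using hh by (intro mult_left_mono) auto
    thus ?thesis by (simp add: mult.commute)
  qed
  also have "\<dots> = - L" using em unfolding h0 by (simp add: algebra_simps)
  finally show "-2*(5/32*\<eta>*h)\<^sup>2/h \<le> -L" .
qed

theorem claim4p6:
  fixes del lam :: real and n :: nat
  assumes "del > 0"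
    and "lam \<ge> 14 * ln (4 / del)"
    and "real n \<ge> lam"
  shows "differentially_private n (C_alg lam n)
           (sqrt (32 * ln (4 / del) / (lam - sqrt (2 * lam * ln (2 / del))))
              * (1 - (lam - sqrt (2 * lam * ln (2 / del))) / real n))
           del"
proof (cases "del \<ge> 1")
  case True
  show ?thesis unfolding differentially_private_def
  proof (intro allI impI)
    fix xs ys :: "bool list" and W :: "nat set"
    have "measure_pmf.prob (C_alg lam n xs) W \<le> 1" by simp
    also have "1 \<le> exp (sqrt (32 * ln (4 / del) / (lam - sqrt (2 * lam * ln (2 / del))))
              * (1 - (lam - sqrt (2 * lam * ln (2 / del))) / real n)) * measure_pmf.prob (C_alg lam n ys) W + del"
      using True by (simp add: add_increasing)
    finally show "measure_pmf.prob (C_alg lam n xs) W \<le> exp (sqrt (32 * ln (4 / del) / (lam - sqrt (2 * lam * ln (2 / del))))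
              * (1 - (lam - sqrt (2 * lam * ln (2 / del))) / real n)) * measure_pmf.prob (C_alg lam n ys) W + del" .
  qed
next
  case False
  hence del1: "del < 1" by simp
  have del0: "0 < del" using assms(1) .
  define L where "L = ln (4 / del)"
  define L2 where "L2 = ln (2 / del)"
  define S where "S = sqrt (2 * lam * L2)"
  define m where "m = lam - S"
  define \<eta> where "\<eta> = sqrt (32 * L / m)"
  define eps where "eps = \<eta> * (1 - m / real n)"
  have eps_eq: "sqrt (32 * ln (4 / del) / (lam - sqrt (2 * lam * ln (2 / del))))
              * (1 - (lam - sqrt (2 * lam * ln (2 / del))) / real n) = eps"
    by (simp add: eps_def \<eta>_def m_def S_def L_def L2_def)
  have ln2: "2/3 \<le> ln (2::real)" by (rule ln2_ge_two_thirds)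
  have LL2: "L = ln 2 + L2"
  proof -
    have e: "4 / del = 2 * (2 / del)" by simp
    have "ln (2 * (2 / del)) = ln 2 + ln (2 / del)" using del0 ln_mult[of 2 "2/del"] by simp
    thus ?thesis unfolding L_def L2_def e .
  qed
  have L2ge: "ln 2 \<le> L2"
    unfolding L2_def using del0 del1 by (subst ln_le_cancel_iff) (auto simp: field_simps)
  have Lge: "4/3 \<le> L" using LL2 L2ge ln2 by linarith
  have L2half: "L / 2 \<le> L2" using LL2 L2ge by linarith
  have L2le: "L2 \<le> L" using LL2 ln2 by linarith
  have lamL: "14 * L \<le> lam" using assms(2) by (simp add: L_def)
  have lampos: "0 < lam" using lamL Lge by linarith
  have nlam: "lam \<le> real n" using assms(3) .
  have npos: "0 < n" using lampos nlam by simp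
  have S0: "0 \<le> S" unfolding S_def using lampos L2ge ln2 by simp
  have S2: "S\<^sup>2 = 2 * lam * L2" unfolding S_def using lampos L2ge ln2 by simp
  have Sup: "S \<le> (19/50) * lam"
  proof (rule power2_le_imp_le)
    have "2 * lam * L2 \<le> 2 * lam * L" using L2le lampos by simp
    also have "\<dots> \<le> lam * lam / 7" using lamL lampos by (simp add: field_simps)
    also have "\<dots> \<le> ((19/50) * lam)\<^sup>2" by (simp add: power2_eq_square)
    finally show "S\<^sup>2 \<le> ((19/50) * lam)\<^sup>2" using S2 by simp
  qed (use lampos in simp)
  have Slow: "(187/50) * L \<le> S"
  proof (rule power2_le_imp_le)
    have "((187/50) * L)\<^sup>2 \<le> 14 * L * L" using Lge by (simp add: power2_eq_square)
    also have "\<dots> \<le> lam * L" using lamL Lge by (intro mult_right_mono) auto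
    also have "\<dots> \<le> 2 * lam * L2" using L2half lampos by (simp add: field_simps)
    finally show "((187/50) * L)\<^sup>2 \<le> S\<^sup>2" using S2 by simp
  qed (use S0 in simp)
  have mlow: "(31/50) * lam \<le> m" using Sup by (simp add: m_def)
  have mL: "(217/25) * L \<le> m" using mlow lamL by linarith
  have mpos: "0 < m" using mL Lge by linarith
  have mle: "m \<le> lam" using S0 by (simp add: m_def)
  have eta0: "0 \<le> \<eta>" unfolding \<eta>_def using mpos Lge by simp
  have eta2: "\<eta>\<^sup>2 = 32 * L / m" unfolding \<eta>_def using mpos Lge by simp
  have eta2m: "\<eta>\<^sup>2 * m = 32 * L" using eta2 mpos by simp
  have eta2le: "\<eta>\<^sup>2 \<le> (37/10)"
  proof -
    have "32 * L \<le> (37/10) * m" using mL Lge by linarith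
    thus ?thesis unfolding eta2 using mpos by (simp add: divide_le_eq)
  qed
  have etale: "\<eta> \<le> (481/250)"
    by (rule power2_le_imp_le) (use eta2le in \<open>simp_all add: power2_eq_square\<close>)
  define p where "p = lam / real n"
  have p0: "0 < p" and p1: "p \<le> 1" using lampos nlam npos by (auto simp: p_def)
  have mp: "m / real n \<le> p" using mle npos by (simp add: p_def divide_right_mono)
  define a where "a = 1 - p"
  have a0: "0 \<le> a" "a \<le> 1" using p0 p1 by (auto simp: a_def)
  define D where "D = \<eta> + \<eta>\<^sup>2 / 2"
  define E where "E = 1 + D"
  define F where "F = 1 + a * \<eta> + (a * \<eta>)\<^sup>2 / 2"
  have E1: "1 \<le> E" using eta0 by (simp add: E_def D_def)
  have F1: "1 \<le> F" using eta0 a0 by (simp add: F_def)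
  have FE: "(1 - p/2) * E + p/2 \<le> F * (p/2 * E + (1 - p/2))"
  proof -
    define c where "c = p / 2"
    have ac: "a = 1 - 2 * c" by (simp add: a_def c_def)
    have c0: "0 \<le> c" using p0 by (simp add: c_def)
    have id: "F * (c * E + (1 - c)) - ((1 - c) * E + c) = a * (c * (\<eta>^3 / 2) + c * D * a * \<eta>\<^sup>2 / 2)"
      unfolding F_def E_def D_def ac by (simp add: field_simps power2_eq_square power3_eq_cube)
    have "0 \<le> a * (c * (\<eta>^3 / 2) + c * D * a * \<eta>\<^sup>2 / 2)"
      using a0 c0 eta0 by (simp add: D_def)
    thus ?thesis using id by (simp add: c_def)
  qed
  have Feps: "F \<le> exp eps"
  proof -
    have "F \<le> exp (a * \<eta>)" unfolding F_def using exp_lower_Taylor_quadratic[of "a * \<eta>"] a0 eta0 by simp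
    also have "a * \<eta> \<le> eps" unfolding eps_def a_def using mp eta0 by (simp add: mult_left_mono mult.commute)
    hence "exp (a * \<eta>) \<le> exp eps" by simp
    finally show ?thesis .
  qed
  define h0 where "h0 = 16/25 * m"
  have expL: "exp (- L) = del / 4"
  proof -
    have "exp L = 4 / del" unfolding L_def using del0 by simp
    thus ?thesis by (simp add: exp_minus)
  qed
  have good: "measure_pmf.prob (binomial_pmf h (1/2)) V \<le> E * measure_pmf.prob (binomial_pmf h (1/2)) {u. Suc u \<in> V} + del/4 \<and>
       measure_pmf.prob (binomial_pmf h (1/2)) {u. Suc u \<in> V} \<le> E * measure_pmf.prob (binomial_pmf h (1/2)) V + del/4"
    if hh: "real h \<ge> h0" for h V
  proof -
    have hpos': "0 < real h" using hh mpos by (simp add: h0_def)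
    hence hpos: "0 < h" by simp
    define \<epsilon> where "\<epsilon> = 5/32 * \<eta> * real h"
    have eps0: "0 \<le> \<epsilon>" using eta0 by (simp add: \<epsilon>_def)
    have E0: "0 \<le> E" using E1 by simp
    have ag: "real h + 1 \<le> (2 + \<eta> + \<eta>\<^sup>2/2) * (real h/2 - 5/32*\<eta>*real h)"
        "-2*(5/32*\<eta>*real h)\<^sup>2/real h \<le> -L"
      using arith_good[OF eta0 etale eta2m mL Lge h0_def hh] by auto
    have key: "real h + 1 \<le> (1 + E) * (real h / 2 - \<epsilon>)"
    proof -
      have "(1 + E) * (real h / 2 - \<epsilon>) = (2 + \<eta> + \<eta>\<^sup>2/2) * (real h/2 - 5/32*\<eta>*real h)"
        unfolding E_def D_def \<epsilon>_def by (simp add: field_simps)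
      thus ?thesis using ag(1) by simp
    qed
    have ex: "exp (- 2 * \<epsilon>\<^sup>2 / real h) \<le> del / 4"
    proof -
      have "exp (- 2 * \<epsilon>\<^sup>2 / real h) \<le> exp (- L)" using ag(2) by (simp add: \<epsilon>_def)
      thus ?thesis using expL by simp
    qed
    show ?thesis
      using binom_ratio1[OF hpos E0 eps0 key, of V] binom_ratio2[OF hpos E0 eps0 key, of V] ex by linarith
  qed
  define T where "T = (\<Sum>k\<le>n-1. real ((n-1) choose k) * p^k * (1-p)^(n-1-k) * (if real k < h0 then 1 else 0))"
  have Tle: "T \<le> del / 4"
  proof -
    have "T \<le> exp (h0/2 - real (n-1) * p / 3)"
      unfolding T_def using p0 p1 mpos by (intro binom_lower_tail) (auto simp: h0_def)
    also have "h0/2 - real (n-1) * p / 3 \<le> - L"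
    proof -
      define q where "q = real (n-1) * p"
      have "q = lam - p" using npos by (simp add: q_def p_def of_nat_diff field_simps)
      hence q1: "q \<ge> lam - 1" using p1 by simp
      have lin: "24 * lam - 24 * S - 25 * q \<le> - 75 * L" using q1 Slow lamL Lge by linarith
      have "h0/2 - q / 3 = (24 * lam - 24 * S - 25 * q) / 75" by (simp add: h0_def m_def field_simps)
      hence "h0/2 - q / 3 \<le> - 75 * L / 75" using lin by (simp add: divide_right_mono)
      hence "h0/2 - q / 3 \<le> - L" by simp
      thus ?thesis by (simp add: q_def)
    qed
    hence "exp (h0/2 - real (n-1) * p / 3) \<le> exp (- L)" by simp
    finally show ?thesis using expL by simp
  qed
  show ?thesis unfolding eps_eq differentially_private_def
  proof (intro allI impI)
    fix xs ys :: "bool list" and W :: "nat set"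
    assume nb: "neighbours n xs ys"
    hence len: "length xs = n" "length ys = n" and c1: "card {i. i < n \<and> xs ! i \<noteq> ys ! i} = 1"
      by (auto simp: neighbours_def)
    obtain j where jset: "{i. i < n \<and> xs ! i \<noteq> ys ! i} = {j}" using c1 by (rule card_1_singletonE)
    have j: "j < n" "xs ! j \<noteq> ys ! j" using jset by auto
    have same: "xs ! i = ys ! i" if "i < n" "i \<noteq> j" for i using jset that by auto
    have pp: "0 \<le> p" "p \<le> 1" "p = lam / real n" using p0 p1 by (auto simp: p_def)
    have d1: "0 \<le> del / 4" using del0 by simp
    have c1: "measure_pmf.prob (C_alg lam n xs) W \<le> F * measure_pmf.prob (C_alg lam n ys) W + del / 4 + T"
    proof (cases "xs ! j")
      case False
      hence "ys ! j" using j by simp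
      thus ?thesis unfolding T_def
        by (rule core(1)[OF j(1) False _ same pp E1 F1 FE d1 good]) auto
    next
      case True
      hence "\<not> ys ! j" using j by simp
      thus ?thesis unfolding T_def
        by (rule core(2)[OF j(1) _ True _ pp E1 F1 FE d1 good]) (auto simp: same)
    qed
    have c2: "F * measure_pmf.prob (C_alg lam n ys) W \<le> exp eps * measure_pmf.prob (C_alg lam n ys) W"
      using Feps by (simp add: mult_right_mono)
    show "measure_pmf.prob (C_alg lam n xs) W \<le> exp eps * measure_pmf.prob (C_alg lam n ys) W + del"
      using c1 c2 Tle del0 by linarith
  qed
qed

end
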